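(* Let $\alpha>1$, let $X=\{x_j:j\in J\}\subset\mathbb{R}^2$ be finite with $n=|J|$, and suppose the $1$-centre $C$ of $X$ is equidistant from all points of $X$. Then $s_\alpha^*=C$ if and only if $C\in\mathrm{conv}(\{M_j(C):j\in J\})$.
   Context: $s_\alpha^*$ is the unique minimiser of $P_\alpha(s,X)=\sum_{j\in J}\|s-x_j\|^\alpha+\max_{j\in J}\|s-x_j\|^\alpha$. $C$ is the centre of the minimum enclosing circle of $X$. For a point $s$, $x_j(s)=s+\|s-x_j\|^{\alpha-2}(x_j-s)$ (so $\|x_j(s)-s\|=\|x_j-s\|^{\alpha-1}$), and $M_j(s)=\frac{1}{n+1}\big(x_j(s)+\sum_{i\in J}x_i(s)\big)$. *)

theory Defs
  imports "HOL-Analysis.Analysis"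
begin

text \<open>Points of the plane are vectors of type real^2. The finite point set X is
indexed by its own elements (J = X, so n = card X).\<close>

definition Pfun :: "real \<Rightarrow> (real^2) set \<Rightarrow> real^2 \<Rightarrow> real" where
  "Pfun \<alpha> X s = (\<Sum>x\<in>X. norm (s - x) powr \<alpha>) + Max ((\<lambda>x. norm (s - x) powr \<alpha>) ` X)"

definition s_star :: "real \<Rightarrow> (real^2) set \<Rightarrow> real^2" where
  "s_star \<alpha> X = (THE s. \<forall>t. Pfun \<alpha> X s \<le> Pfun \<alpha> X t)"

definition max_dist :: "(real^2) set \<Rightarrow> real^2 \<Rightarrow> real" where
  "max_dist X s = Max ((\<lambda>x. norm (s - x)) ` X)"

definition one_centre :: "(real^2) set \<Rightarrow> real^2" where
  "one_centre X = (THE c. \<forall>t. max_dist X c \<le> max_dist X t)"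

definition xs_pt :: "real \<Rightarrow> real^2 \<Rightarrow> real^2 \<Rightarrow> real^2" where
  "xs_pt \<alpha> x s = s + (norm (s - x) powr (\<alpha> - 2)) *\<^sub>R (x - s)"

definition M_pt :: "real \<Rightarrow> (real^2) set \<Rightarrow> real^2 \<Rightarrow> real^2 \<Rightarrow> real^2" where
  "M_pt \<alpha> X x s = (1 / (real (card X) + 1)) *\<^sub>R (xs_pt \<alpha> x s + (\<Sum>y\<in>X. xs_pt \<alpha> y s))"

end

theory Submission
  imports Defs
begin

lemma bern_strict:
  fixes x \<alpha> :: real
  assumes "1 < \<alpha>" "0 \<le> x" "x \<noteq> 1"
  shows "1 + \<alpha> * (x - 1) < x powr \<alpha>"
proof (cases "x = 0")
  case True then show ?thesis using assms by simp
next
  case False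
  hence xp: "x > 0" using assms by simp
  define g where "g = (\<lambda>y::real. y powr \<alpha> - \<alpha> * y)"
  have der: "DERIV g y :> \<alpha> * (y powr (\<alpha> - 1) - 1)" if "y > 0" for y
    unfolding g_def using that
    by (auto intro!: derivative_eq_intros simp: algebra_simps)
  have cont: "continuous_on {a..b} g" if "0 < a" for a b
    unfolding g_def using that by (auto intro!: continuous_intros)
  show ?thesis
  proof (cases "x < 1")
    case True
    have "g 1 < g x"
    proof (rule DERIV_neg_imp_decreasing_open[OF True])
      fix y assume "x < y" "y < 1"
      moreover have "y powr (\<alpha> - 1) < 1 powr (\<alpha> - 1)"
        using \<open>x<y\<close> \<open>y<1\<close> xp assms(1) by (intro powr_less_mono2) auto
      ultimately show "\<exists>d. DERIV g y :> d \<and> d < 0"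
        using der[of y] xp assms(1) by (intro exI[of _ "\<alpha> * (y powr (\<alpha> - 1) - 1)"]) (auto simp: mult_pos_neg)
    qed (use cont xp in auto)
    then show ?thesis unfolding g_def by (simp add: algebra_simps)
  next
    case False
    hence x1: "1 < x" using assms by simp
    have "g 1 < g x"
    proof (rule DERIV_pos_imp_increasing_open[OF x1])
      fix y assume "1 < y" "y < x"
      moreover have "1 powr (\<alpha> - 1) < y powr (\<alpha> - 1)"
        using \<open>1<y\<close> assms(1) by (intro powr_less_mono2) auto
      ultimately show "\<exists>d. DERIV g y :> d \<and> d > 0"
        using der[of y] assms(1) by (intro exI[of _ "\<alpha> * (y powr (\<alpha> - 1) - 1)"]) auto
    qed (use cont in auto)
    then show ?thesis unfolding g_def by (simp add: algebra_simps)
  qed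
qed

lemma tangent_strict:
  fixes a b \<alpha> :: real
  assumes "1 < \<alpha>" "0 < a" "0 \<le> b" "b \<noteq> a"
  shows "a powr \<alpha> + \<alpha> * a powr (\<alpha> - 1) * (b - a) < b powr \<alpha>"
proof -
  have "1 + \<alpha> * (b/a - 1) < (b/a) powr \<alpha>"
    using assms by (intro bern_strict) auto
  hence "a powr \<alpha> * (1 + \<alpha> * (b/a - 1)) < a powr \<alpha> * (b/a) powr \<alpha>"
    using assms by (intro mult_strict_left_mono) auto
  also have "a powr \<alpha> * (b/a) powr \<alpha> = b powr \<alpha>"
    using assms by (simp add: powr_divide)
  also have "a powr \<alpha> * (1 + \<alpha> * (b/a - 1)) = a powr \<alpha> + \<alpha> * a powr (\<alpha> - 1) * (b - a)"
    using assms by (simp add: powr_diff field_simps)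
  finally show ?thesis .
qed

lemma grad_strict:
  fixes y y' :: "'a::real_inner" and \<alpha> :: real
  assumes "1 < \<alpha>" "y' \<noteq> y"
  shows "norm y powr \<alpha> + \<alpha> * norm y powr (\<alpha> - 2) * inner y (y' - y) < norm y' powr \<alpha>"
proof (cases "y = 0")
  case True then show ?thesis using assms by simp
next
  case False
  define a where "a = norm y"
  define b where "b = norm y'"
  have ap: "a > 0" using False a_def by simp
  have e1: "a powr (\<alpha> - 2) * a\<^sup>2 = a powr \<alpha>"
    using ap by (simp add: powr_diff power2_eq_square field_simps powr_add[symmetric])
  have e2: "a powr (\<alpha> - 2) * a = a powr (\<alpha> - 1)"
    using ap by (simp add: powr_diff field_simps power2_eq_square)
  have ii: "inner y (y' - y) = inner y y' - a\<^sup>2"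
    by (simp add: a_def inner_diff_right power2_norm_eq_inner)
  have pp: "0 < a powr (\<alpha> - 2)" using ap by simp
  show ?thesis
  proof (cases "b = a")
    case True
    have "0 < (norm (y' - y))\<^sup>2" using assms by simp
    also have "(norm (y' - y))\<^sup>2 = b\<^sup>2 - 2 * inner y y' + a\<^sup>2"
      by (simp add: a_def b_def power2_norm_eq_inner inner_diff_left inner_diff_right inner_commute)
    finally have "inner y (y' - y) < 0" using True ii by simp
    hence "\<alpha> * a powr (\<alpha> - 2) * inner y (y' - y) < 0"
      using pp assms(1) by (simp add: mult_pos_neg)
    thus ?thesis using True a_def b_def by simp
  next
    case False
    have cs: "inner y y' \<le> a * b" unfolding a_def b_def by (rule norm_cauchy_schwarz)
    have "\<alpha> * a powr (\<alpha> - 2) * inner y (y' - y) \<le> \<alpha> * a powr (\<alpha> - 2) * (a * b - a\<^sup>2)"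
      using cs ii pp assms(1) by (intro mult_left_mono) auto
    also have "\<dots> = \<alpha> * a powr (\<alpha> - 1) * (b - a)"
      using e1 e2 by (simp add: algebra_simps power2_eq_square)
    finally have "norm y powr \<alpha> + \<alpha> * norm y powr (\<alpha> - 2) * inner y (y' - y)
       \<le> a powr \<alpha> + \<alpha> * a powr (\<alpha> - 1) * (b - a)" by (simp add: a_def)
    also have "\<dots> < b powr \<alpha>" using tangent_strict[OF assms(1) ap _ False] b_def by simp
    finally show ?thesis by (simp add: b_def)
  qed
qed


lemma Max_cont:
  fixes f :: "'b \<Rightarrow> 'a::topological_space \<Rightarrow> real"
  assumes "finite X" "X \<noteq> {}" "\<forall>x\<in>X. continuous_on UNIV (f x)"
  shows "continuous_on UNIV (\<lambda>s. Max ((\<lambda>x. f x s) ` X))"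
  using assms
proof (induction X rule: finite_ne_induct)
  case (singleton x) then show ?case by simp
next
  case (insert x F)
  have "(\<lambda>s. Max ((\<lambda>x. f x s) ` insert x F)) = (\<lambda>s. max (f x s) (Max ((\<lambda>x. f x s) ` F)))"
    using insert by (auto simp: Max_insert)
  then show ?case using insert by (auto intro!: continuous_on_max)
qed

lemma P_cont:
  assumes "1 < \<alpha>" "finite X" "X \<noteq> {}"
  shows "continuous_on UNIV (Pfun \<alpha> X)"
proof -
  have c1: "continuous_on UNIV (\<lambda>s. norm (s - x) powr \<alpha>)" for x :: "real^2"
    using assms(1) by (intro continuous_on_powr') (auto intro!: continuous_intros)
  have "continuous_on UNIV (\<lambda>s. Max ((\<lambda>x. norm (s - x) powr \<alpha>) ` X))"
    using Max_cont[of X "\<lambda>x s. norm (s - x) powr \<alpha>"] assms c1 by auto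
  then show ?thesis unfolding Pfun_def[abs_def] using c1
    by (intro continuous_on_add continuous_on_sum) auto
qed

lemma P_ge:
  assumes "finite X" "x \<in> X"
  shows "norm (t - x) powr \<alpha> \<le> Max ((\<lambda>x. norm (t - x) powr \<alpha>) ` X)"
  using assms by (intro Max_ge) auto

lemma P_ge2:
  assumes "finite X" "x \<in> X"
  shows "norm (t - x) powr \<alpha> \<le> Pfun \<alpha> X t"
proof -
  have "0 \<le> (\<Sum>x\<in>X. norm (t - x) powr \<alpha>)" by (intro sum_nonneg) auto
  then show ?thesis using P_ge[OF assms, of t \<alpha>] unfolding Pfun_def by linarith
qed

lemma exists_min:
  assumes "1 < \<alpha>" "finite X" "X \<noteq> {}"
  shows "\<exists>s. \<forall>t. Pfun \<alpha> X s \<le> Pfun \<alpha> X t"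
proof -
  obtain x0 where x0: "x0 \<in> X" using assms by auto
  define R where "R = Pfun \<alpha> X x0 + 1"
  have "0 \<le> Pfun \<alpha> X x0" using P_ge2[OF assms(2) x0, of x0 \<alpha>] by simp
  hence R1: "1 \<le> R" by (simp add: R_def)
  obtain s where s: "s \<in> cball x0 R" "\<forall>y\<in>cball x0 R. Pfun \<alpha> X s \<le> Pfun \<alpha> X y"
  proof -
    have "continuous_on (cball x0 R) (Pfun \<alpha> X)"
      using P_cont[OF assms] by (rule continuous_on_subset) auto
    then show ?thesis using continuous_attains_inf[of "cball x0 R" "Pfun \<alpha> X"] R1 that by auto
  qed
  have "Pfun \<alpha> X s \<le> Pfun \<alpha> X t" for t
  proof (cases "t \<in> cball x0 R")
    case True then show ?thesis using s by auto
  next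
    case False
    hence d: "R < norm (t - x0)" by (simp add: dist_norm norm_minus_commute)
    have "Pfun \<alpha> X s \<le> Pfun \<alpha> X x0" using s R1 by auto
    also have "\<dots> < R" by (simp add: R_def)
    also have "R = R powr 1" using R1 by simp
    also have "\<dots> \<le> R powr \<alpha>" using R1 assms(1) by (intro powr_mono) auto
    also have "\<dots> < norm (t - x0) powr \<alpha>" using d R1 assms(1) by (intro powr_less_mono2) auto
    also have "\<dots> \<le> Pfun \<alpha> X t" by (rule P_ge2[OF assms(2) x0])
    finally show ?thesis by simp
  qed
  then show ?thesis by blast
qed

lemma unique_min:
  assumes "1 < \<alpha>" "finite X" "X \<noteq> {}"
    and s: "\<forall>u. Pfun \<alpha> X s \<le> Pfun \<alpha> X u" and t: "\<forall>u. Pfun \<alpha> X t \<le> Pfun \<alpha> X u"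
  shows "s = t"
proof (rule ccontr)
  assume st: "s \<noteq> t"
  define m where "m = (1/2) *\<^sub>R (s + t)"
  define F where "F = (\<lambda>x u::real^2. norm (u - x) powr \<alpha>)"
  have mid: "2 * F x m < F x s + F x t" for x
  proof -
    have d1: "s - x - (m - x) = (1/2) *\<^sub>R (s - t)" unfolding m_def by (simp add: vec_eq_iff algebra_simps)
    have d2: "t - x - (m - x) = - ((1/2) *\<^sub>R (s - t))" unfolding m_def by (simp add: vec_eq_iff algebra_simps)
    have n1: "s - x \<noteq> m - x"
    proof
      assume "s - x = m - x"
      hence "(1/2) *\<^sub>R (s - t) = 0" using d1 by simp
      thus False using st by simp
    qed
    have n2: "t - x \<noteq> m - x"
    proof
      assume "t - x = m - x"
      hence "(1/2) *\<^sub>R (s - t) = 0" using d2 by simp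
      thus False using st by simp
    qed
    show ?thesis using grad_strict[OF assms(1) n1] grad_strict[OF assms(1) n2]
      unfolding F_def d1 d2 by (simp add: inner_minus_right)
  qed
  have sum: "2 * (\<Sum>x\<in>X. F x m) < (\<Sum>x\<in>X. F x s) + (\<Sum>x\<in>X. F x t)"
  proof -
    have "(\<Sum>x\<in>X. 2 * F x m) < (\<Sum>x\<in>X. F x s + F x t)"
      using assms(2,3) mid by (intro sum_strict_mono) auto
    then show ?thesis by (simp add: sum_distrib_left sum.distrib)
  qed
  obtain x0 where x0: "x0 \<in> X" "F x0 m = Max ((\<lambda>x. F x m) ` X)"
  proof -
    have "Max ((\<lambda>x. F x m) ` X) \<in> (\<lambda>x. F x m) ` X"
      using assms(2,3) by (intro Max_in) auto
    then show ?thesis using that by force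
  qed
  have "2 * Max ((\<lambda>x. F x m) ` X) \<le> Max ((\<lambda>x. F x s) ` X) + Max ((\<lambda>x. F x t) ` X)"
    using mid[of x0] x0 P_ge[OF assms(2) x0(1), of s \<alpha>] P_ge[OF assms(2) x0(1), of t \<alpha>]
    unfolding F_def by linarith
  hence "2 * Pfun \<alpha> X m < Pfun \<alpha> X s + Pfun \<alpha> X t"
    using sum unfolding Pfun_def F_def by (simp add: algebra_simps)
  moreover have "Pfun \<alpha> X s \<le> Pfun \<alpha> X m" "Pfun \<alpha> X t \<le> Pfun \<alpha> X m" using s t by auto
  ultimately show False by linarith
qed

lemma s_star_iff:
  assumes "1 < \<alpha>" "finite X" "X \<noteq> {}"
  shows "s_star \<alpha> X = c \<longleftrightarrow> (\<forall>t. Pfun \<alpha> X c \<le> Pfun \<alpha> X t)"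
proof -
  have ex1: "\<exists>!s. \<forall>t. Pfun \<alpha> X s \<le> Pfun \<alpha> X t"
    using exists_min[OF assms] unique_min[OF assms] by blast
  show ?thesis
    unfolding s_star_def using the1_equality[OF ex1] theI'[OF ex1] by metis
qed


lemma grad_le:
  fixes y y' :: "'a::real_inner" and \<alpha> :: real
  assumes "1 < \<alpha>"
  shows "norm y powr \<alpha> + \<alpha> * norm y powr (\<alpha> - 2) * inner y (y' - y) \<le> norm y' powr \<alpha>"
  using grad_strict[OF assms, of y' y] by (cases "y' = y") auto

lemma M_minus:
  assumes "finite X"
  shows "M_pt \<alpha> X x c - c = (1 / (real (card X) + 1)) *\<^sub>R
     ((xs_pt \<alpha> x c - c) + (\<Sum>y\<in>X. xs_pt \<alpha> y c - c))"
proof -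
  define k where "k = 1 / (real (card X) + 1)"
  have k1: "k * (real (card X) + 1) = 1" unfolding k_def by (simp add: add_pos_nonneg)
  have "(\<Sum>y\<in>X. xs_pt \<alpha> y c - c) = (\<Sum>y\<in>X. xs_pt \<alpha> y c) - real (card X) *\<^sub>R c"
    by (simp add: sum_subtractf sum_constant_scaleR del: sum_constant)
  hence eq2: "(xs_pt \<alpha> x c - c) + (\<Sum>y\<in>X. xs_pt \<alpha> y c - c)
       = (xs_pt \<alpha> x c + (\<Sum>y\<in>X. xs_pt \<alpha> y c)) - (real (card X) + 1) *\<^sub>R c"
    by (simp add: algebra_simps)
  have "k *\<^sub>R ((xs_pt \<alpha> x c - c) + (\<Sum>y\<in>X. xs_pt \<alpha> y c - c))
       = k *\<^sub>R (xs_pt \<alpha> x c + (\<Sum>y\<in>X. xs_pt \<alpha> y c)) - (k * (real (card X) + 1)) *\<^sub>R c"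
    by (simp only: eq2 scaleR_diff_right scaleR_scaleR)
  then show ?thesis unfolding M_pt_def k_def[symmetric] k1 by simp
qed

lemma v_eq: "xs_pt \<alpha> x c - c = norm (c - x) powr (\<alpha> - 2) *\<^sub>R (x - c)"
  by (simp add: xs_pt_def)

lemma grad_c:
  assumes "1 < \<alpha>"
  shows "norm (c - x) powr \<alpha> - \<alpha> * inner (xs_pt \<alpha> x c - c) (t - c) \<le> norm (t - x) powr \<alpha>"
proof -
  have "inner (xs_pt \<alpha> x c - c) (t - c) = - (norm (c - x) powr (\<alpha> - 2) * inner (c - x) (t - x - (c - x)))"
    unfolding v_eq by (simp add: inner_diff_left inner_diff_right algebra_simps)
  then show ?thesis using grad_le[OF assms, of "c - x" "t - x"] by simp
qed

lemma P_const:
  assumes "finite X" "X \<noteq> {}" "\<forall>x\<in>X. norm (c - x) = r"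
  shows "Pfun \<alpha> X c = real (card X) * r powr \<alpha> + r powr \<alpha>"
proof -
  have "(\<Sum>x\<in>X. norm (c - x) powr \<alpha>) = (\<Sum>x\<in>X. r powr \<alpha>)" using assms(3) by simp
  moreover have "(\<lambda>x. norm (c - x) powr \<alpha>) ` X = {r powr \<alpha>}" using assms(2,3) by auto
  ultimately show ?thesis unfolding Pfun_def by simp
qed

lemma suff:
  assumes "1 < \<alpha>" "finite X" "X \<noteq> {}" "\<forall>x\<in>X. norm (c - x) = r"
    and hull: "c \<in> convex hull ((\<lambda>x. M_pt \<alpha> X x c) ` X)"
  shows "Pfun \<alpha> X c \<le> Pfun \<alpha> X t"
proof -
  define n where "n = real (card X)"
  define v where "v = (\<lambda>x. xs_pt \<alpha> x c - c)"
  define \<kappa> where "\<kappa> = (Pfun \<alpha> X c - Pfun \<alpha> X t) / (\<alpha> * (n + 1))"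
  have np: "0 < \<alpha> * (n + 1)" using assms(1) by (simp add: n_def add_pos_nonneg)
  have Pc: "Pfun \<alpha> X c = n * r powr \<alpha> + r powr \<alpha>" using P_const[OF assms(2-4)] n_def by simp
  have key: "\<kappa> + inner (t - c) c \<le> inner (t - c) (M_pt \<alpha> X j c)" if j: "j \<in> X" for j
  proof -
    define S where "S = (\<Sum>x\<in>X. inner (v x) (t - c))"
    have "(\<Sum>x\<in>X. norm (c - x) powr \<alpha> - \<alpha> * inner (v x) (t - c)) \<le> (\<Sum>x\<in>X. norm (t - x) powr \<alpha>)"
      unfolding v_def by (intro sum_mono grad_c[OF assms(1)])
    moreover have "(\<Sum>x\<in>X. norm (c - x) powr \<alpha> - \<alpha> * inner (v x) (t - c))
        = n * r powr \<alpha> - \<alpha> * S"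
      using assms(4) by (simp add: sum_subtractf sum_distrib_left n_def S_def)
    moreover have "norm (c - j) powr \<alpha> - \<alpha> * inner (v j) (t - c) \<le> norm (t - j) powr \<alpha>"
      unfolding v_def by (rule grad_c[OF assms(1)])
    moreover have "norm (c - j) = r" using assms(4) j by simp
    moreover have "norm (t - j) powr \<alpha> \<le> Max ((\<lambda>x. norm (t - x) powr \<alpha>) ` X)"
      by (rule P_ge[OF assms(2) j])
    moreover have "Pfun \<alpha> X t = (\<Sum>x\<in>X. norm (t - x) powr \<alpha>) + Max ((\<lambda>x. norm (t - x) powr \<alpha>) ` X)"
      by (simp add: Pfun_def)
    ultimately have "Pfun \<alpha> X c - Pfun \<alpha> X t \<le> \<alpha> * (inner (v j) (t - c) + (\<Sum>x\<in>X. inner (v x) (t - c)))"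
      using Pc unfolding S_def by (simp add: algebra_simps)
    also have "inner (v j) (t - c) + (\<Sum>x\<in>X. inner (v x) (t - c)) = (n + 1) * inner (t - c) (M_pt \<alpha> X j c - c)"
      using np unfolding M_minus[OF assms(2)] v_def n_def
      by (simp add: inner_add_right inner_sum_right inner_commute)
    finally have "\<kappa> \<le> inner (t - c) (M_pt \<alpha> X j c - c)"
      unfolding \<kappa>_def using np by (simp add: pos_divide_le_eq[OF np] mult_ac)
    then show ?thesis by (simp add: inner_diff_right)
  qed
  have "convex hull ((\<lambda>x. M_pt \<alpha> X x c) ` X) \<subseteq> {y. inner (t - c) y \<ge> \<kappa> + inner (t - c) c}"
    using key by (intro hull_minimal convex_halfspace_ge) auto
  hence "\<kappa> \<le> 0" using hull by auto
  then show ?thesis unfolding \<kappa>_def using np by (simp add: divide_le_0_iff)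
qed


lemma nec:
  assumes "1 < \<alpha>" "finite X" "X \<noteq> {}" "\<forall>x\<in>X. norm (c - x) = r" "0 < r"
    and nh: "c \<notin> convex hull ((\<lambda>x. M_pt \<alpha> X x c) ` X)"
  shows "\<exists>t. Pfun \<alpha> X t < Pfun \<alpha> X c"
proof -
  define n where "n = real (card X)"
  define v where "v = (\<lambda>x. xs_pt \<alpha> x c - c)"
  have np: "0 < n + 1" by (simp add: n_def add_pos_nonneg)
  have "closed (convex hull ((\<lambda>x. M_pt \<alpha> X x c) ` X))"
    using assms(2) by (intro compact_imp_closed compact_convex_hull finite_imp_compact) auto
  then obtain d b where db: "inner d c < b" "\<forall>y\<in>convex hull ((\<lambda>x. M_pt \<alpha> X x c) ` X). inner d y > b"
    using separating_hyperplane_closed_point[OF convex_convex_hull _ nh] by blast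
  have pos: "0 < inner d (v j) + (\<Sum>x\<in>X. inner d (v x))" if j: "j \<in> X" for j
  proof -
    have "M_pt \<alpha> X j c \<in> convex hull ((\<lambda>x. M_pt \<alpha> X x c) ` X)" using j by (intro hull_inc) auto
    hence "0 < inner d (M_pt \<alpha> X j c - c)" using db by (auto simp: inner_diff_right)
    also have "inner d (M_pt \<alpha> X j c - c) = (inner d (v j) + (\<Sum>x\<in>X. inner d (v x))) / (n + 1)"
      unfolding M_minus[OF assms(2)] v_def n_def by (simp add: inner_add_right inner_sum_right)
    finally show ?thesis using np by (simp add: zero_less_divide_iff)
  qed
  define H where "H = (\<lambda>x e. \<alpha> * norm (c + e *\<^sub>R d - x) powr (\<alpha> - 2) * inner (c + e *\<^sub>R d - x) d)"
  define Q where "Q = (\<lambda>j e. (\<Sum>x\<in>X. H x e) + H j e)"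
  have H0: "H x 0 = - \<alpha> * inner d (v x)" for x
    unfolding H_def v_def v_eq by (simp add: inner_diff_left inner_commute algebra_simps)
  have Hlim: "(H x \<longlongrightarrow> H x 0) (at_right 0)" if "x \<in> X" for x
  proof -
    have nz: "norm (c + 0 *\<^sub>R d - x) \<noteq> 0" using assms(4,5) that by simp
    have l1: "((\<lambda>e. c + e *\<^sub>R d - x) \<longlongrightarrow> c + 0 *\<^sub>R d - x) (at_right 0)"
      by (intro tendsto_intros)
    have l2: "((\<lambda>e. norm (c + e *\<^sub>R d - x) powr (\<alpha> - 2)) \<longlongrightarrow> norm (c + 0 *\<^sub>R d - x) powr (\<alpha> - 2)) (at_right 0)"
      by (rule tendsto_powr[OF tendsto_norm[OF l1] tendsto_const nz])
    show ?thesis unfolding H_def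
      by (intro tendsto_mult tendsto_const l2 tendsto_inner l1)
  qed
  have "eventually (\<lambda>e. Q j e < 0) (at_right 0)" if j: "j \<in> X" for j
  proof -
    have "(Q j \<longlongrightarrow> Q j 0) (at_right 0)" unfolding Q_def
      using Hlim j by (intro tendsto_add tendsto_sum) auto
    moreover have "Q j 0 < 0"
    proof -
      have "(\<Sum>x\<in>X. H x 0) = - \<alpha> * (\<Sum>x\<in>X. inner d (v x))"
        unfolding H0 by (simp add: sum_distrib_left)
      hence "Q j 0 = - \<alpha> * (inner d (v j) + (\<Sum>x\<in>X. inner d (v x)))"
        unfolding Q_def H0 by (simp add: algebra_simps)
      moreover have "0 < \<alpha> * (inner d (v j) + (\<Sum>x\<in>X. inner d (v x)))"
        using pos[OF j] assms(1) by simp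
      ultimately show ?thesis by simp
    qed
    ultimately show ?thesis by (rule order_tendstoD(2))
  qed
  hence "eventually (\<lambda>e. \<forall>j\<in>X. Q j e < 0) (at_right 0)"
    using assms(2) by (simp add: eventually_ball_finite_distrib)
  then obtain b0 where b0: "b0 > 0" "\<forall>e>0. e < b0 \<longrightarrow> (\<forall>j\<in>X. Q j e < 0)"
    unfolding eventually_at_right_field by blast
  define e where "e = b0 / 2"
  have e: "0 < e" "\<forall>j\<in>X. Q j e < 0" using b0 by (auto simp: e_def)
  define t where "t = c + e *\<^sub>R d"
  have Ft: "norm (t - x) powr \<alpha> \<le> norm (c - x) powr \<alpha> + e * H x e" for x
  proof -
    have "norm (t - x) powr \<alpha> + \<alpha> * norm (t - x) powr (\<alpha> - 2) * inner (t - x) (c - x - (t - x))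
       \<le> norm (c - x) powr \<alpha>" by (rule grad_le[OF assms(1)])
    moreover have "inner (t - x) (c - x - (t - x)) = - e * inner (t - x) d"
      unfolding t_def by (simp add: inner_minus_right)
    ultimately show ?thesis unfolding H_def t_def by (simp add: algebra_simps)
  qed
  obtain j where j: "j \<in> X" "norm (t - j) powr \<alpha> = Max ((\<lambda>x. norm (t - x) powr \<alpha>) ` X)"
  proof -
    have "Max ((\<lambda>x. norm (t - x) powr \<alpha>) ` X) \<in> (\<lambda>x. norm (t - x) powr \<alpha>) ` X"
      using assms(2,3) by (intro Max_in) auto
    then show ?thesis using that by force
  qed
  have "Pfun \<alpha> X t = (\<Sum>x\<in>X. norm (t - x) powr \<alpha>) + norm (t - j) powr \<alpha>"
    unfolding Pfun_def j(2) ..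
  also have "\<dots> \<le> (\<Sum>x\<in>X. norm (c - x) powr \<alpha> + e * H x e) + (norm (c - j) powr \<alpha> + e * H j e)"
    by (intro add_mono sum_mono Ft)
  also have "\<dots> = ((\<Sum>x\<in>X. norm (c - x) powr \<alpha>) + norm (c - j) powr \<alpha>) + e * Q j e"
    unfolding Q_def by (simp add: sum.distrib sum_distrib_left algebra_simps)
  also have "\<dots> < (\<Sum>x\<in>X. norm (c - x) powr \<alpha>) + norm (c - j) powr \<alpha>"
    using e j(1) by (simp add: mult_pos_neg)
  also have "\<dots> = Pfun \<alpha> X c"
  proof -
    have "(\<lambda>x. norm (c - x) powr \<alpha>) ` X = {r powr \<alpha>}" using assms(3,4) by auto
    then show ?thesis unfolding Pfun_def using assms(4) j(1) by simp
  qed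
  finally show ?thesis by blast
qed

theorem proposition5:
  fixes \<alpha> :: real and X :: "(real^2) set"
  assumes "\<alpha> > 1" and "finite X" and "X \<noteq> {}"
    and "\<exists>r. \<forall>x\<in>X. norm (one_centre X - x) = r"
  shows "s_star \<alpha> X = one_centre X \<longleftrightarrow>
         one_centre X \<in> convex hull ((\<lambda>x. M_pt \<alpha> X x (one_centre X)) ` X)"
proof -
  define c where "c = one_centre X"
  obtain r where r: "\<forall>x\<in>X. norm (c - x) = r" using assms(4) c_def by auto
  obtain x0 where x0: "x0 \<in> X" using assms(3) by blast
  have r0: "0 \<le> r" using r x0 by (metis norm_ge_zero)
  have iff: "s_star \<alpha> X = c \<longleftrightarrow> (\<forall>t. Pfun \<alpha> X c \<le> Pfun \<alpha> X t)" by (rule s_star_iff[OF assms(1-3)])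
  have "(\<forall>t. Pfun \<alpha> X c \<le> Pfun \<alpha> X t) \<longleftrightarrow> c \<in> convex hull ((\<lambda>x. M_pt \<alpha> X x c) ` X)"
  proof
    assume min: "\<forall>t. Pfun \<alpha> X c \<le> Pfun \<alpha> X t"
    show "c \<in> convex hull ((\<lambda>x. M_pt \<alpha> X x c) ` X)"
    proof (rule ccontr)
      assume nh: "c \<notin> convex hull ((\<lambda>x. M_pt \<alpha> X x c) ` X)"
      show False
      proof (cases "r = 0")
        case True
        have "norm (c - x0) = 0" using r True x0 by simp
        hence "x0 = c" by simp
        have X: "X = {c}"
        proof
          show "X \<subseteq> {c}"
          proof
            fix x assume "x \<in> X"
            hence "norm (c - x) = 0" using r True by simp
            thus "x \<in> {c}" by simp
          qed
          show "{c} \<subseteq> X" using x0 \<open>x0 = c\<close> by simp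
        qed
        have "M_pt \<alpha> X c c = c" unfolding X M_pt_def xs_pt_def by (simp add: vec_eq_iff)
        hence "c \<in> (\<lambda>x. M_pt \<alpha> X x c) ` X" using x0 \<open>x0 = c\<close> by (metis image_eqI)
        hence "c \<in> convex hull ((\<lambda>x. M_pt \<alpha> X x c) ` X)" by (rule hull_inc)
        then show False using nh by simp
      next
        case False
        then have "0 < r" using r0 by simp
        then obtain t where "Pfun \<alpha> X t < Pfun \<alpha> X c" using nec[OF assms(1-3) r _ nh] by blast
        then show False using min not_le by blast
      qed
    qed
  next
    assume "c \<in> convex hull ((\<lambda>x. M_pt \<alpha> X x c) ` X)"
    then show "\<forall>t. Pfun \<alpha> X c \<le> Pfun \<alpha> X t" using suff[OF assms(1-3) r] by blast
  qed
  then show ?thesis using iff by (simp add: c_def)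
qed

end
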